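(* Let $G$ be a graph of order $n\geq 3$, and let $u$ and $v$ be non-adjacent vertices of $G$. Then $$C(G+uv)\leq C(G)+\left(1-\frac{2}{n}+\frac{4}{n(n-1)}\right),$$ with equality if and only if $G$ is the complete bipartite graph $K_{2,n-2}$ and $u$ and $v$ are the two vertices of degree $n-2$ in $G$.
   Context: All graphs are finite and simple; $G+uv$ denotes the graph obtained from $G$ by adding the edge $uv$. For a vertex $w$ of a graph $G$, $N_G(w)$ is its neighborhood, $d_G(w)$ its degree, and $m(G[N_G(w)])$ the number of edges of the subgraph induced by $N_G(w)$. The clustering coefficient of $w$ in $G$ is $C_w(G)=m(G[N_G(w)])/\binom{d_G(w)}{2}$ if $d_G(w)\geq 2$, and $C_w(G)=0$ otherwise. The clustering coefficient of $G$ is $C(G)=\frac{1}{n(G)}\sum_{w\in V(G)}C_w(G)$, where $n(G)$ is the order of $G$. *)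

theory Defs
  imports Complex_Main
begin

definition simple_graph :: "'a set \<Rightarrow> ('a \<Rightarrow> 'a \<Rightarrow> bool) \<Rightarrow> bool" where
  "simple_graph V E \<longleftrightarrow> finite V \<and> (\<forall>x y. E x y \<longrightarrow> x \<in> V \<and> y \<in> V)
     \<and> (\<forall>x y. E x y \<longrightarrow> E y x) \<and> (\<forall>x. \<not> E x x)"

definition add_edge :: "('a \<Rightarrow> 'a \<Rightarrow> bool) \<Rightarrow> 'a \<Rightarrow> 'a \<Rightarrow> ('a \<Rightarrow> 'a \<Rightarrow> bool)" where
  "add_edge E u v = (\<lambda>x y. E x y \<or> (x = u \<and> y = v) \<or> (x = v \<and> y = u))"

definition nbhd :: "'a set \<Rightarrow> ('a \<Rightarrow> 'a \<Rightarrow> bool) \<Rightarrow> 'a \<Rightarrow> 'a set" where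
  "nbhd V E w = {x \<in> V. E w x}"

definition degree :: "'a set \<Rightarrow> ('a \<Rightarrow> 'a \<Rightarrow> bool) \<Rightarrow> 'a \<Rightarrow> nat" where
  "degree V E w = card (nbhd V E w)"

definition induced_edges :: "('a \<Rightarrow> 'a \<Rightarrow> bool) \<Rightarrow> 'a set \<Rightarrow> nat" where
  "induced_edges E S = card {e. \<exists>x y. e = {x, y} \<and> x \<in> S \<and> y \<in> S \<and> E x y}"

definition local_cc :: "'a set \<Rightarrow> ('a \<Rightarrow> 'a \<Rightarrow> bool) \<Rightarrow> 'a \<Rightarrow> real" where
  "local_cc V E w =
     (if degree V E w \<ge> 2
      then real (induced_edges E (nbhd V E w)) / real (degree V E w choose 2)
      else 0)"

definition cc :: "'a set \<Rightarrow> ('a \<Rightarrow> 'a \<Rightarrow> bool) \<Rightarrow> real" where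
  "cc V E = (\<Sum>w\<in>V. local_cc V E w) / real (card V)"

text \<open>G is (isomorphic to) the complete bipartite graph K_{2,n-2}, n = |V|.\<close>
definition is_K2_rest :: "'a set \<Rightarrow> ('a \<Rightarrow> 'a \<Rightarrow> bool) \<Rightarrow> bool" where
  "is_K2_rest V E \<longleftrightarrow> (\<exists>A B. A \<inter> B = {} \<and> A \<union> B = V \<and> card A = 2 \<and> card B = card V - 2
     \<and> (\<forall>x\<in>V. \<forall>y\<in>V. E x y \<longleftrightarrow> (x \<in> A \<and> y \<in> B) \<or> (x \<in> B \<and> y \<in> A)))"

end

theory Submission
  imports Defs
begin


lemma choose2_real: "real (n choose 2) = real n * (real n - 1) / 2"
proof (induction n)
  case 0 then show ?case by simp
next
  case (Suc n)
  have "(Suc n choose Suc 1) = (n choose 1) + (n choose Suc 1)"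
    by (rule binomial_Suc_Suc)
  then have "(Suc n choose 2) = (n choose 2) + n"
    by (simp only: Suc_1 choose_one add.commute)
  then show ?case using Suc by (simp add: field_simps)
qed

definition eset :: "('a \<Rightarrow> 'a \<Rightarrow> bool) \<Rightarrow> 'a set \<Rightarrow> 'a set set" where
  "eset E S = {e. \<exists>x y. e = {x, y} \<and> x \<in> S \<and> y \<in> S \<and> E x y}"

lemma ie_eset: "induced_edges E S = card (eset E S)"
  by (simp add: induced_edges_def eset_def)

lemma eset_sub: "\<forall>x. \<not> E x x \<Longrightarrow> eset E S \<subseteq> {T. T \<subseteq> S \<and> card T = 2}"
proof
  fix e assume "\<forall>x. \<not> E x x" "e \<in> eset E S"
  then obtain x y where "e = {x,y}" "x \<in> S" "y \<in> S" "E x y" unfolding eset_def by blast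
  moreover have "x \<noteq> y" using \<open>\<forall>x. \<not> E x x\<close> \<open>E x y\<close> by metis
  ultimately show "e \<in> {T. T \<subseteq> S \<and> card T = 2}" by auto
qed

lemma ie_le: assumes "finite S" "\<forall>x. \<not> E x x"
  shows "induced_edges E S \<le> card S choose 2"
proof -
  have "card (eset E S) \<le> card {T. T \<subseteq> S \<and> card T = 2}"
    by (rule card_mono) (use assms eset_sub[of E S] n_subsets[OF assms(1), of 2] in \<open>auto intro: card_ge_0_finite\<close>)
  then show ?thesis using n_subsets[OF assms(1), of 2] by (simp add: ie_eset)
qed

lemma eset_add_not: "\<not> (u \<in> S \<and> v \<in> S) \<Longrightarrow> eset (add_edge E u v) S = eset E S"
  unfolding eset_def add_edge_def by blast

lemma eset_add_both: assumes "u \<in> S" "v \<in> S" "\<not> E u v" "\<not> E v u" "u \<noteq> v"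
  shows "eset (add_edge E u v) S = insert {u,v} (eset E S)" "{u,v} \<notin> eset E S"
proof -
  show "eset (add_edge E u v) S = insert {u,v} (eset E S)"
    using assms unfolding eset_def add_edge_def by blast
  show "{u,v} \<notin> eset E S"
    using assms unfolding eset_def by (auto simp: doubleton_eq_iff)
qed

lemma eset_insert: assumes "v \<notin> S" "\<forall>x y. E x y \<longrightarrow> E y x" "\<not> E v v"
  shows "eset E (insert v S) = eset E S \<union> (\<lambda>x. {v,x}) ` {x\<in>S. E v x}"
proof
  show "eset E (insert v S) \<subseteq> eset E S \<union> (\<lambda>x. {v,x}) ` {x\<in>S. E v x}"
  proof
    fix e assume "e \<in> eset E (insert v S)"
    then obtain x y where e: "e = {x,y}" "x \<in> insert v S" "y \<in> insert v S" "E x y" unfolding eset_def by blast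
    show "e \<in> eset E S \<union> (\<lambda>x. {v,x}) ` {x\<in>S. E v x}"
    proof (cases "x = v")
      case True
      then show ?thesis using e assms(2,3) by (cases "y = v") (auto simp: eset_def)
    next
      case False
      show ?thesis
      proof (cases "y = v")
        case True
        then have "e = {v, x}" "E v x" using e assms(2) by auto
        then show ?thesis using e False by auto
      next
        case False
        then show ?thesis using e \<open>x \<noteq> v\<close> unfolding eset_def by blast
      qed
    qed
  qed
  show "eset E S \<union> (\<lambda>x. {v,x}) ` {x\<in>S. E v x} \<subseteq> eset E (insert v S)"
    unfolding eset_def by blast
qed

lemma ie_insert: assumes "finite S" "v \<notin> S" "\<forall>x y. E x y \<longrightarrow> E y x" "\<not> E v v"
  shows "induced_edges E (insert v S) = induced_edges E S + card {x\<in>S. E v x}"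
proof -
  have fin: "finite (eset E S)"
    by (rule finite_subset[of _ "Pow S"]) (use assms(1) in \<open>auto simp: eset_def\<close>)
  have disj: "eset E S \<inter> (\<lambda>x. {v,x}) ` {x\<in>S. E v x} = {}"
    using assms(2) unfolding eset_def by (auto simp: doubleton_eq_iff)
  have inj: "inj_on (\<lambda>x. {v,x}) {x\<in>S. E v x}"
    using assms(2) by (auto simp: inj_on_def doubleton_eq_iff)
  show ?thesis
    unfolding ie_eset eset_insert[OF assms(2,3,4)]
    by (subst card_Un_disjoint) (use fin disj inj assms(1) in \<open>auto simp: card_image\<close>)
qed

lemma delta_aux:
  fixes d m k :: nat
  assumes "m \<le> d choose 2"
  shows "real (m+k)/real(Suc d choose 2) - real m/real(d choose 2) \<le> real k/real(Suc d choose 2)"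
proof -
  have c': "real (Suc d choose 2) = real (d choose 2) + real d"
    by (simp add: choose2_real field_simps)
  have "real m/real(Suc d choose 2) \<le> real m/real(d choose 2)"
  proof (cases "d choose 2 = 0")
    case True then have "m = 0" using assms by (metis le_zero_eq)
    then show ?thesis by simp
  next
    case False
    then show ?thesis using c' by (intro divide_left_mono) auto
  qed
  then show ?thesis by (simp add: add_divide_distrib)
qed

lemma delta0:
  fixes d m :: nat
  assumes "m \<le> d choose 2"
  shows "real (m+0)/real(Suc d choose 2) - real m/real(d choose 2) \<le> 0"
  using delta_aux[OF assms, of 0] by simp

lemma delta_bound:
  fixes d m k :: nat
  assumes "m \<le> d choose 2" "k \<le> d" "1 \<le> k"
  shows "real (m+k)/real(Suc d choose 2) - real m/real(d choose 2) \<le> 2/(real k+1)"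
    and "real (m+k)/real(Suc d choose 2) - real m/real(d choose 2) = 2/(real k+1) \<Longrightarrow> d = k"
proof -
  have c': "real (Suc d choose 2) = real d * (real d + 1) / 2"
    by (simp add: choose2_real field_simps)
  have dpos: "real d \<ge> 1" using assms by simp
  have kd: "real k \<le> real d" using assms by simp
  have e: "real k/real(Suc d choose 2) = 2 * real k / (real d * (real d + 1))"
    unfolding c' by simp
  have k2: "2 * real k / (real d * (real d + 1)) \<le> 2 / (real d + 1)"
  proof -
    have "2 * real k / (real d * (real d + 1)) \<le> 2 * real d / (real d * (real d + 1))"
      using kd dpos by (intro divide_right_mono) auto
    also have "2 * real d / (real d * (real d + 1)) = 2/(real d+1)" using dpos by simp
    finally show ?thesis .
  qed
  also have "\<dots> \<le> 2/(real k+1)"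
    using kd assms by (simp add: field_simps)
  finally show "real (m+k)/real(Suc d choose 2) - real m/real(d choose 2) \<le> 2/(real k+1)"
    using delta_aux[OF assms(1), of k] e by linarith
  assume eq: "real (m+k)/real(Suc d choose 2) - real m/real(d choose 2) = 2/(real k+1)"
  show "d = k"
  proof (rule ccontr)
    assume "d \<noteq> k"
    then have "real k < real d" using assms by simp
    then have "2 / (real d + 1) < 2/(real k+1)"
      using assms by (simp add: field_simps)
    moreover note k2
    ultimately show False using delta_aux[OF assms(1), of k] e eq by linarith
  qed
qed

lemma local_cc_eq: "local_cc V E w = real (induced_edges E (nbhd V E w)) / real (degree V E w choose 2)"
  unfolding local_cc_def by (auto simp: binomial_eq_0)

lemma sg_props: assumes "simple_graph V E"
  shows "finite V" "\<And>x y. E x y \<Longrightarrow> x \<in> V" "\<And>x y. E x y \<Longrightarrow> y \<in> V"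
    "\<And>x y. E x y \<Longrightarrow> E y x" "\<And>x. \<not> E x x"
  using assms unfolding simple_graph_def by blast+

lemma nb_other: "w \<noteq> u \<Longrightarrow> w \<noteq> v \<Longrightarrow> nbhd V (add_edge E u v) w = nbhd V E w"
  unfolding nbhd_def add_edge_def by auto

lemma nb_u: "v \<in> V \<Longrightarrow> u \<noteq> v \<Longrightarrow> nbhd V (add_edge E u v) u = insert v (nbhd V E u)"
  unfolding nbhd_def add_edge_def by auto

lemma add_edge_sym: "add_edge E v u = add_edge E u v"
  unfolding add_edge_def by (intro ext) auto

lemma finite_nbhd: "finite V \<Longrightarrow> finite (nbhd V E w)"
  unfolding nbhd_def by auto

lemma local_other:
  assumes sg: "simple_graph V E" and "u \<in> V" "v \<in> V" "u \<noteq> v" "\<not> E u v"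
    and w: "w \<noteq> u" "w \<noteq> v"
  shows "local_cc V (add_edge E u v) w = local_cc V E w +
     (if w \<in> nbhd V E u \<inter> nbhd V E v then 1 / real (degree V E w choose 2) else 0)"
proof -
  note p = sg_props[OF sg]
  have vu: "\<not> E v u" using assms p(4) by blast
  have N: "nbhd V (add_edge E u v) w = nbhd V E w" using nb_other w by metis
  have D: "degree V (add_edge E u v) w = degree V E w" unfolding degree_def N ..
  show ?thesis
  proof (cases "w \<in> nbhd V E u \<inter> nbhd V E v")
    case True
    then have "u \<in> nbhd V E w" "v \<in> nbhd V E w" using p(4) assms unfolding nbhd_def by auto
    note b = eset_add_both[OF this \<open>\<not> E u v\<close> vu \<open>u \<noteq> v\<close>]
    have fin: "finite (eset E (nbhd V E w))"
      by (rule finite_subset[of _ "Pow (nbhd V E w)"]) (use finite_nbhd[OF p(1)] in \<open>auto simp: eset_def\<close>)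
    have "induced_edges (add_edge E u v) (nbhd V E w) = induced_edges E (nbhd V E w) + 1"
      unfolding ie_eset b(1) using b(2) fin by simp
    then show ?thesis using True unfolding local_cc_eq N D by (simp add: add_divide_distrib)
  next
    case False
    then have "\<not> (u \<in> nbhd V E w \<and> v \<in> nbhd V E w)" using p(2,4) assms unfolding nbhd_def by auto
    then have "induced_edges (add_edge E u v) (nbhd V E w) = induced_edges E (nbhd V E w)"
      unfolding ie_eset using eset_add_not by metis
    then show ?thesis using False unfolding local_cc_eq N D by (simp only: False if_False)
  qed
qed

lemma local_u:
  assumes sg: "simple_graph V E" and "u \<in> V" "v \<in> V" "u \<noteq> v" "\<not> E u v"
  shows "local_cc V (add_edge E u v) u =
     real (induced_edges E (nbhd V E u) + card (nbhd V E u \<inter> nbhd V E v)) / real (Suc (degree V E u) choose 2)"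
proof -
  note p = sg_props[OF sg]
  have N: "nbhd V (add_edge E u v) u = insert v (nbhd V E u)" using nb_u assms by metis
  have vn: "v \<notin> nbhd V E u" using assms unfolding nbhd_def by auto
  have fin: "finite (nbhd V E u)" using finite_nbhd p(1) by metis
  have D: "degree V (add_edge E u v) u = Suc (degree V E u)"
    unfolding degree_def N using vn fin by simp
  have un: "u \<notin> insert v (nbhd V E u)" using assms p(5) unfolding nbhd_def by auto
  have "induced_edges (add_edge E u v) (insert v (nbhd V E u)) = induced_edges E (insert v (nbhd V E u))"
    unfolding ie_eset using eset_add_not[of u "insert v (nbhd V E u)" v E] un by simp
  also have "\<dots> = induced_edges E (nbhd V E u) + card {x \<in> nbhd V E u. E v x}"
    by (rule ie_insert) (use fin vn p in auto)
  also have "{x \<in> nbhd V E u. E v x} = nbhd V E u \<inter> nbhd V E v" unfolding nbhd_def by auto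
  finally have m: "induced_edges (add_edge E u v) (nbhd V (add_edge E u v) u) = induced_edges E (nbhd V E u) + card (nbhd V E u \<inter> nbhd V E v)"
    unfolding N .
  show ?thesis unfolding local_cc_eq m D ..
qed



lemma sum_decomp:
  assumes sg: "simple_graph V E" and "u \<in> V" "v \<in> V" "u \<noteq> v" "\<not> E u v"
  shows "(\<Sum>w\<in>V. local_cc V (add_edge E u v) w) = (\<Sum>w\<in>V. local_cc V E w)
     + (\<Sum>w\<in>nbhd V E u \<inter> nbhd V E v. 1 / real (degree V E w choose 2))
     + (local_cc V (add_edge E u v) u - local_cc V E u)
     + (local_cc V (add_edge E u v) v - local_cc V E v)"
proof -
  note p = sg_props[OF sg]
  define R where "R = V - {u,v}"
  define K where "K = nbhd V E u \<inter> nbhd V E v"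
  define f where "f w = 1 / real (degree V E w choose 2)" for w
  have V: "V = insert u (insert v R)" using assms unfolding R_def by auto
  have fR: "finite R" using p(1) unfolding R_def by auto
  have uR: "u \<notin> insert v R" "v \<notin> R" using assms unfolding R_def by auto
  have KR: "K \<subseteq> R" unfolding K_def R_def nbhd_def using p(5) by auto
  have "(\<Sum>w\<in>R. local_cc V (add_edge E u v) w) = (\<Sum>w\<in>R. local_cc V E w + (if w \<in> K then f w else 0))"
    by (rule sum.cong) (use local_other[OF assms] in \<open>auto simp: R_def K_def f_def\<close>)
  also have "\<dots> = (\<Sum>w\<in>R. local_cc V E w) + (\<Sum>w\<in>R \<inter> K. f w)"
    by (simp add: sum.distrib sum.inter_restrict[OF fR])
  also have "R \<inter> K = K" using KR by auto
  finally have eq: "(\<Sum>w\<in>R. local_cc V (add_edge E u v) w) = (\<Sum>w\<in>R. local_cc V E w) + (\<Sum>w\<in>K. f w)" .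
  have split: "sum g V = g u + g v + sum g R" for g :: "'a \<Rightarrow> real"
    by (subst V) (use fR uR in \<open>auto simp: add.assoc\<close>)
  show ?thesis
    unfolding split[of "local_cc V (add_edge E u v)"] split[of "local_cc V E"] eq
    by (simp add: K_def f_def)
qed

lemma bound_real:
  fixes K n :: real
  assumes "1 \<le> K" "K \<le> n - 2" "3 \<le> n"
  shows "K + 4/(K+1) \<le> n - 2 + 4/(n-1)" and "K + 4/(K+1) = n - 2 + 4/(n-1) \<Longrightarrow> K = n - 2"
proof -
  have a: "n - 1 > 0" "K + 1 > 0" using assms by auto
  have id: "n - 2 + 4/(n-1) - (K + 4/(K+1)) = (n-2-K) * (1 - 4/((n-1)*(K+1)))"
  proof -
    have "4/(n-1) - 4/(K+1) = 4*((K+1) - (n-1))/((n-1)*(K+1))"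
      using a by (simp add: field_simps)
    also have "\<dots> = - (n-2-K) * (4/((n-1)*(K+1)))" by (simp add: algebra_simps)
    finally have h: "4/(n-1) - 4/(K+1) = - (n-2-K) * (4/((n-1)*(K+1)))" .
    have h2: "(n-2-K) * (1 - 4/((n-1)*(K+1))) = (n-2-K) - (n-2-K) * (4/((n-1)*(K+1)))"
      by (simp add: right_diff_distrib)
    show ?thesis using h h2 by linarith
  qed
  have ge: "(n-1)*(K+1) \<ge> 2*2" using assms by (intro mult_mono) auto
  then have "4/((n-1)*(K+1)) \<le> 1" by simp
  then have "(n-2-K) * (1 - 4/((n-1)*(K+1))) \<ge> 0" using assms by simp
  then show "K + 4/(K+1) \<le> n - 2 + 4/(n-1)" using id by linarith
  assume eq: "K + 4/(K+1) = n - 2 + 4/(n-1)"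
  show "K = n - 2"
  proof (rule ccontr)
    assume "K \<noteq> n - 2"
    then have lt: "K < n - 2" using assms by simp
    have "(n-1)*(K+1) > 2*2" using assms lt by (intro mult_less_le_imp_less) auto
    then have "4/((n-1)*(K+1)) < 1" by simp
    then have "(n-2-K) * (1 - 4/((n-1)*(K+1))) > 0" using lt by simp
    then show False using id eq by linarith
  qed
qed

lemma K2_struct:
  assumes sg: "simple_graph V E" and uv: "u \<in> V" "v \<in> V" "u \<noteq> v" "\<not> E u v"
    and K2: "is_K2_rest V E" and du: "degree V E u = card V - 2" and n3: "card V \<ge> 3"
  shows "\<forall>x\<in>V. \<forall>y\<in>V. E x y \<longleftrightarrow> (x \<in> {u,v} \<and> y \<notin> {u,v}) \<or> (x \<notin> {u,v} \<and> y \<in> {u,v})"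
proof -
  note p = sg_props[OF sg]
  obtain A B where AB: "A \<inter> B = {}" "A \<union> B = V" "card A = 2" "card B = card V - 2"
    and rel: "\<forall>x\<in>V. \<forall>y\<in>V. E x y \<longleftrightarrow> (x \<in> A \<and> y \<in> B) \<or> (x \<in> B \<and> y \<in> A)"
    using K2 unfolding is_K2_rest_def by blast
  have fA: "finite A" "finite B" using AB p(1) by (auto intro: finite_subset)
  have c2: "card {u,v} = 2" using uv by simp
  have cases: "A = {u,v} \<or> B = {u,v}"
  proof (cases "u \<in> A")
    case True
    then have "v \<in> A" using rel uv AB by blast
    then have "A = {u,v}" using True c2 AB(3) fA by (intro card_subset_eq[symmetric]) auto
    then show ?thesis ..
  next
    case False
    then have uB: "u \<in> B" using AB uv by blast
    then have vB: "v \<in> B" using rel uv AB by blast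
    have "nbhd V E u = A" unfolding nbhd_def using rel uB AB uv by blast
    then have "card V - 2 = 2" using du AB unfolding degree_def by simp
    then have "card B = 2" using AB by simp
    then have "B = {u,v}" using uB vB c2 fA by (intro card_subset_eq[symmetric]) auto
    then show ?thesis ..
  qed
  then show ?thesis
  proof
    assume "A = {u,v}"
    then have "B = V - {u,v}" using AB by blast
    then show ?thesis using rel \<open>A = {u,v}\<close> by blast
  next
    assume "B = {u,v}"
    then have "A = V - {u,v}" using AB by blast
    then show ?thesis using rel \<open>B = {u,v}\<close> by blast
  qed
qed

lemma choose2_ge:
  assumes "d \<ge> 2" shows "real (d choose 2) \<ge> 1" and "d \<noteq> 2 \<Longrightarrow> real (d choose 2) > 1"
proof -
  have a: "real d \<ge> 2" using assms by simp
  have "real d * (real d - 1) \<ge> 2 * 1" using a by (intro mult_mono) auto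
  then show "real (d choose 2) \<ge> 1" unfolding choose2_real by simp
  assume "d \<noteq> 2"
  then have "real d \<ge> 3" using assms by simp
  then have "real d * (real d - 1) \<ge> 3 * 2" by (intro mult_mono) auto
  then show "real (d choose 2) > 1" unfolding choose2_real by simp
qed

theorem theorem4:
  fixes V :: "'a set" and E :: "'a \<Rightarrow> 'a \<Rightarrow> bool" and u v :: 'a
  assumes "simple_graph V E"
    and "card V \<ge> 3"
    and "u \<in> V" "v \<in> V" "u \<noteq> v" "\<not> E u v"
  defines "n \<equiv> real (card V)"
  shows "cc V (add_edge E u v) \<le> cc V E + (1 - 2 / n + 4 / (n * (n - 1)))
     \<and> (cc V (add_edge E u v) = cc V E + (1 - 2 / n + 4 / (n * (n - 1)))
        \<longleftrightarrow> is_K2_rest V E \<and> degree V E u = card V - 2 \<and> degree V E v = card V - 2)"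
proof -
  note p = sg_props[OF assms(1)]
  note uv = assms(3-6)
  have vu: "\<not> E v u" using uv p(4) by blast
  define K where "K = nbhd V E u \<inter> nbhd V E v"
  define R where "R = V - {u,v}"
  define k where "k = card K"
  define du where "du = degree V E u"
  define dv where "dv = degree V E v"
  define mu where "mu = induced_edges E (nbhd V E u)"
  define mv where "mv = induced_edges E (nbhd V E v)"
  define f where "f w = 1 / real (degree V E w choose 2)" for w
  define Sk where "Sk = (\<Sum>w\<in>K. f w)"
  define Du where "Du = local_cc V (add_edge E u v) u - local_cc V E u"
  define Dv where "Dv = local_cc V (add_edge E u v) v - local_cc V E v"
  define T where "T = Sk + Du + Dv"
  define B where "B = n - 2 + 4 / (n - 1)"
  define cond where "cond = (is_K2_rest V E \<and> degree V E u = card V - 2 \<and> degree V E v = card V - 2)"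
  have n3: "n \<ge> 3" using assms(2) unfolding n_def by simp
  have sum: "(\<Sum>w\<in>V. local_cc V (add_edge E u v) w) = (\<Sum>w\<in>V. local_cc V E w) + T"
    using sum_decomp[OF assms(1) uv] unfolding T_def Sk_def Du_def Dv_def K_def f_def by simp
  have ccT: "cc V (add_edge E u v) = cc V E + T / n"
    unfolding cc_def sum n_def by (simp add: add_divide_distrib)
  have bB: "1 - 2 / n + 4 / (n * (n - 1)) = B / n"
  proof -
    have "n \<noteq> 0" "n - 1 \<noteq> 0" using n3 by auto
    then show ?thesis unfolding B_def by (simp add: field_simps)
  qed
  have Du_eq: "Du = real (mu + k) / real (Suc du choose 2) - real mu / real (du choose 2)"
  proof -
    have a: "local_cc V (add_edge E u v) u = real (mu + k) / real (Suc du choose 2)"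
      unfolding mu_def k_def K_def du_def by (rule local_u[OF assms(1) uv])
    have b: "local_cc V E u = real mu / real (du choose 2)"
      unfolding mu_def du_def by (rule local_cc_eq)
    show ?thesis unfolding Du_def a b ..
  qed
  have Dv_eq: "Dv = real (mv + k) / real (Suc dv choose 2) - real mv / real (dv choose 2)"
  proof -
    have KK: "K = nbhd V E v \<inter> nbhd V E u" unfolding K_def by blast
    have a: "local_cc V (add_edge E v u) v = real (mv + k) / real (Suc dv choose 2)"
      unfolding mv_def k_def KK dv_def by (rule local_u[OF assms(1) uv(2,1) uv(3)[symmetric] vu])
    have b: "local_cc V E v = real mv / real (dv choose 2)"
      unfolding mv_def dv_def by (rule local_cc_eq)
    show ?thesis unfolding Dv_def b a[unfolded add_edge_sym[of E v u]] ..
  qed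
  have fN: "finite (nbhd V E w)" for w by (rule finite_nbhd[OF p(1)])
  have irr: "\<forall>x. \<not> E x x" using p(5) by blast
  have mu_le: "mu \<le> du choose 2" unfolding mu_def du_def degree_def by (rule ie_le[OF fN, of E, OF irr])
  have mv_le: "mv \<le> dv choose 2" unfolding mv_def dv_def degree_def by (rule ie_le[OF fN, of E, OF irr])
  have k_du: "k \<le> du" unfolding k_def du_def degree_def K_def by (rule card_mono[OF fN]) blast
  have k_dv: "k \<le> dv" unfolding k_def dv_def degree_def K_def by (rule card_mono[OF fN]) blast
  have fK: "finite K" unfolding K_def by (intro finite_Int disjI1 fN)
  have fR: "finite R" unfolding R_def using p(1) by simp
  have KR: "K \<subseteq> R" unfolding K_def R_def nbhd_def using p(5) by auto
  have cR: "card R = card V - 2" unfolding R_def using uv p(1) by (simp add: card_Diff_subset)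
  have k_le: "k \<le> card V - 2" unfolding k_def using card_mono[OF fR KR] cR by simp
  have dw: "degree V E w \<ge> 2" if "w \<in> K" for w
  proof -
    have "{u,v} \<subseteq> nbhd V E w" using that p(4) uv unfolding K_def nbhd_def by auto
    then have "card {u,v} \<le> degree V E w" unfolding degree_def by (intro card_mono fN)
    then show ?thesis using uv by simp
  qed
  have g1: "\<And>x::real. x \<ge> 1 \<Longrightarrow> 1/x \<le> 1" by simp
  have g2: "\<And>x::real. x > 1 \<Longrightarrow> 1/x < 1" by simp
  have fle: "f w \<le> 1" if "w \<in> K" for w
    unfolding f_def by (rule g1[OF choose2_ge(1)[OF dw[OF that]]])
  have flt: "f w < 1" if "w \<in> K" "degree V E w \<noteq> 2" for w
    unfolding f_def by (rule g2[OF choose2_ge(2)[OF dw[OF that(1)] that(2)]])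
  have Sk_le: "Sk \<le> real k"
  proof -
    have "Sk \<le> (\<Sum>w\<in>K. 1)" unfolding Sk_def by (rule sum_mono) (use fle in auto)
    then show ?thesis unfolding k_def by simp
  qed
  have nk: "real k \<le> n - 2" using k_le assms(2) unfolding n_def by linarith

  have conv: "T = B" if c: cond
  proof -
    have K2: "is_K2_rest V E" and duc: "degree V E u = card V - 2" using c unfolding cond_def by auto
    have H: "\<forall>x\<in>V. \<forall>y\<in>V. E x y \<longleftrightarrow> (x \<in> {u,v} \<and> y \<notin> {u,v}) \<or> (x \<notin> {u,v} \<and> y \<in> {u,v})"
      by (rule K2_struct[OF assms(1) uv K2 duc assms(2)])
    have Nu: "nbhd V E u = R" unfolding nbhd_def R_def using H uv by auto
    have Nv: "nbhd V E v = R" unfolding nbhd_def R_def using H uv by auto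
    have KR': "K = R" unfolding K_def Nu Nv by simp
    have kR: "k = card V - 2" unfolding k_def KR' cR ..
    have k1: "k \<ge> 1" using kR assms(2) by simp
    have Nw: "nbhd V E w = {u,v}" if "w \<in> R" for w
      using that H uv unfolding nbhd_def R_def by auto
    have Sk_eq: "Sk = real k"
    proof -
      have "Sk = (\<Sum>w\<in>K. 1)" unfolding Sk_def
        by (rule sum.cong) (use Nw uv in \<open>auto simp: f_def degree_def KR' choose_two\<close>)
      then show ?thesis unfolding k_def by simp
    qed
    have m0: "induced_edges E R = 0"
    proof -
      have "eset E R = {}" unfolding eset_def using H unfolding R_def by auto
      then show ?thesis unfolding ie_eset by simp
    qed
    have duk: "du = k" unfolding du_def degree_def Nu KR' k_def ..
    have dvk: "dv = k" unfolding dv_def degree_def Nv KR' k_def ..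
    have mu0: "mu = 0" unfolding mu_def Nu m0 ..
    have mv0: "mv = 0" unfolding mv_def Nv m0 ..
    have Dk: "real k / real (Suc k choose 2) = 2 / (real k + 1)"
    proof -
      have a: "real k \<noteq> 0" "real k + 1 \<noteq> 0" using k1 by auto
      have "real (Suc k choose 2) = (real k + 1) * real k / 2" unfolding choose2_real by simp
      then show ?thesis using a by (simp add: field_simps)
    qed
    have D: "Du = 2 / (real k + 1)" "Dv = 2 / (real k + 1)"
      unfolding Du_eq Dv_eq duk dvk mu0 mv0 using Dk by simp_all
    have nk': "n - 1 = real k + 1" "n - 2 = real k" using kR assms(2) unfolding n_def by auto
    have "2 / (real k + 1) + 2 / (real k + 1) = 4 / (real k + 1)"
      by (simp add: add_divide_distrib[symmetric])
    then show ?thesis unfolding T_def B_def Sk_eq D nk' by simp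
  qed

  have main: "T \<le> B \<and> (T = B \<longleftrightarrow> cond)"
  proof (cases "k = 0")
    case True
    then have "K = {}" using fK unfolding k_def by simp
    then have "Sk = 0" unfolding Sk_def by simp
    moreover have "Du \<le> 0" unfolding Du_eq True using delta0[OF mu_le] by simp
    moreover have "Dv \<le> 0" unfolding Dv_eq True using delta0[OF mv_le] by simp
    moreover have "B > 0" unfolding B_def using n3 by (simp add: add_pos_pos)
    ultimately have "T < B" unfolding T_def by linarith
    then show ?thesis using conv by auto
  next
    case False
    then have k1: "1 \<le> k" by simp
    have bu: "Du \<le> 2 / (real k + 1)" unfolding Du_eq by (rule delta_bound(1)[OF mu_le k_du k1])
    have bv: "Dv \<le> 2 / (real k + 1)" unfolding Dv_eq by (rule delta_bound(1)[OF mv_le k_dv k1])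
    have br: "real k + 4 / (real k + 1) \<le> B"
      unfolding B_def by (rule bound_real(1)) (use k1 nk n3 in auto)
    have s4: "2 / (real k + 1) + 2 / (real k + 1) = 4 / (real k + 1)"
      by (simp add: add_divide_distrib[symmetric])
    have Tle: "T \<le> B" unfolding T_def using Sk_le bu bv br s4 by linarith
    have "cond" if TB: "T = B"
    proof -
      have e1: "Sk = real k" "Du = 2 / (real k + 1)" "Dv = 2 / (real k + 1)"
        and e2: "real k + 4 / (real k + 1) = B"
        using TB Sk_le bu bv br s4 unfolding T_def by linarith+
      have kn: "real k = n - 2"
        using bound_real(2)[of "real k" n] e2 k1 nk n3 unfolding B_def by auto
      have duk: "du = k" by (rule delta_bound(2)[OF mu_le k_du k1]) (use e1 Du_eq in simp)
      have dvk: "dv = k" by (rule delta_bound(2)[OF mv_le k_dv k1]) (use e1 Dv_eq in simp)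
      have kc: "k = card V - 2" using kn assms(2) unfolding n_def by linarith
      have KR': "K = R" using card_subset_eq[OF fR KR] kc cR unfolding k_def by simp
      have deg2: "degree V E w = 2" if "w \<in> K" for w
      proof (rule ccontr)
        assume "degree V E w \<noteq> 2"
        then have "Sk < (\<Sum>w\<in>K. 1)" unfolding Sk_def
          using sum_strict_mono_ex1[OF fK, of f "\<lambda>_. 1"] fle flt that by blast
        then show False using e1 unfolding k_def by simp
      qed
      have a: "E u y \<and> E v y" if "y \<in> R" for y
        using that unfolding KR'[symmetric] K_def nbhd_def by auto
      have b: "nbhd V E x = {u,v}" if "x \<in> R" for x
      proof -
        have "{u,v} \<subseteq> nbhd V E x" using a[OF that] p(4) uv unfolding nbhd_def by auto
        moreover have "card (nbhd V E x) = card {u,v}"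
          using deg2[of x] that uv unfolding KR' degree_def by simp
        ultimately show ?thesis using fN by (intro card_subset_eq[symmetric]) auto
      qed
      have rel: "\<forall>x\<in>V. \<forall>y\<in>V. E x y = (x \<in> {u, v} \<and> y \<in> R \<or> x \<in> R \<and> y \<in> {u, v})"
      proof (intro ballI)
        fix x y assume xy: "x \<in> V" "y \<in> V"
        show "E x y = (x \<in> {u, v} \<and> y \<in> R \<or> x \<in> R \<and> y \<in> {u, v})"
        proof (cases "x \<in> R")
          case True
          then show ?thesis using b[OF True] xy unfolding nbhd_def R_def by auto
        next
          case False
          then have "x = u \<or> x = v" using xy unfolding R_def by auto
          then show ?thesis using a xy uv vu p(5) unfolding R_def by auto
        qed
      qed
      have parts: "{u, v} \<inter> R = {}" "{u, v} \<union> R = V" using uv unfolding R_def by auto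
      have c2: "card {u, v} = 2" using uv by simp
      have K2: "is_K2_rest V E"
        unfolding is_K2_rest_def using parts c2 cR rel by blast
      show cond unfolding cond_def using K2 duk dvk kc unfolding du_def dv_def by simp
    qed
    then show ?thesis using Tle conv by auto
  qed
  have npos: "n > 0" using n3 by simp
  show ?thesis
    unfolding ccT bB cond_def[symmetric] using main npos
    by (auto simp: divide_right_mono divide_cancel_right)
qed


end
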